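(* The inverse of $T$ (defined on the range of $T$) is unbounded, i.e. there is no constant $C<\infty$ with $\|\rho\|_{\ell^2(\mathbb{Z}^2)}\leq C\|T\rho\|_{L^2(\mathbb{Z}\times[-\pi,\pi])}$ for all $\rho\in\ell^2(\mathbb{Z}\times\mathbb{Z})$.
   Context: Fix a complex number $g_\omega\neq 0$ (coupling constant). For $\theta\in[-\pi,\pi]$ let $U_\omega(\theta)$ be the unitary operator on $\ell^2(\mathbb{Z})$ with matrix entries $(U_\omega(\theta))_{k,l}=e^{\mathrm{i}(k-l)\theta}J_{k-l}(2|g_\omega|)$, $k,l\in\mathbb{Z}$, where $J_n$ is the Bessel function of the first kind of order $n$. The forward operator $T:\ell^2(\mathbb{Z}\times\mathbb{Z})\to L^2(\mathbb{Z}\times[-\pi,\pi])$ (the target space carries counting measure times Lebesgue measure) is the bounded linear operator $$(T\rho)(l,\theta)=\big(U_\omega(\theta)\rho\,U_\omega(\theta)^*\big)_{l,l}=\sum_{m,n\in\mathbb{Z}}e^{\mathrm{i}(l-m)\theta}J_{l-m}(2|g_\omega|)\,\rho_{m,n}\,e^{-\mathrm{i}(l-n)\theta}J_{l-n}(2|g_\omega|),$$ where a matrix $\rho=(\rho_{j,k})_{j,k\in\mathbb{Z}}\in\ell^2(\mathbb{Z}\times\mathbb{Z})$ is identified with a Hilbert–Schmidt operator on $\ell^2(\mathbb{Z})$. *)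

theory Defs
  imports "HOL-Analysis.Analysis"
begin

definition bessel_J_nat :: "nat \<Rightarrow> real \<Rightarrow> real" where
  "bessel_J_nat n x = (\<Sum>k. (-1) ^ k / (fact k * fact (k + n)) * (x / 2) ^ (2 * k + n))"

definition bessel_J :: "int \<Rightarrow> real \<Rightarrow> real" where
  "bessel_J n x = (if n \<ge> 0 then bessel_J_nat (nat n) x
                   else (-1) ^ (nat (- n)) * bessel_J_nat (nat (- n)) x)"

definition U_entry :: "complex \<Rightarrow> real \<Rightarrow> int \<Rightarrow> int \<Rightarrow> complex" where
  "U_entry g \<theta> k l = cis (of_int (k - l) * \<theta>) * complex_of_real (bessel_J (k - l) (2 * cmod g))"

definition l2_ZZ :: "(int \<times> int \<Rightarrow> complex) set" where
  "l2_ZZ = {\<rho>. (\<lambda>p. (cmod (\<rho> p))\<^sup>2) summable_on UNIV}"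

definition l2_normsq :: "(int \<times> int \<Rightarrow> complex) \<Rightarrow> ennreal" where
  "l2_normsq \<rho> = (\<Sum>\<^sub>\<infinity>p. ennreal ((cmod (\<rho> p))\<^sup>2))"

text \<open>The forward operator: (T rho)(l,theta) = (U rho U^*)_{l,l}.\<close>
definition T_op :: "complex \<Rightarrow> (int \<times> int \<Rightarrow> complex) \<Rightarrow> int \<Rightarrow> real \<Rightarrow> complex" where
  "T_op g \<rho> l \<theta> = (\<Sum>\<^sub>\<infinity>(m, n). U_entry g \<theta> l m * \<rho> (m, n) * cnj (U_entry g \<theta> l n))"

definition L2_normsq :: "(int \<Rightarrow> real \<Rightarrow> complex) \<Rightarrow> ennreal" where
  "L2_normsq f = (\<Sum>\<^sub>\<infinity>l. \<integral>\<^sup>+ \<theta>. ennreal ((cmod (f l \<theta>))\<^sup>2) * indicator {-pi..pi} \<theta> \<partial>lborel)"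

end

theory Submission imports Defs begin

lemma bessel_nat_bound:
  fixes a :: real and n :: nat
  assumes a: "a \<ge> 0"
  shows "\<bar>bessel_J_nat n (2*a)\<bar> \<le> exp (a\<^sup>2) * (a ^ n / fact n)"
proof -
  define t where "t k = (-1) ^ k / (fact k * fact (k + n)) * ((2*a) / 2) ^ (2 * k + n)" for k
  define u where "u k = (a ^ n / fact n) * ((a\<^sup>2) ^ k / fact k)" for k
  have su: "summable u" unfolding u_def
    by (rule summable_mult) (use summable_exp[of "a\<^sup>2"] in \<open>simp add: field_simps\<close>)
  have tu: "\<bar>t k\<bar> \<le> u k" for k
  proof -
    have "\<bar>t k\<bar> = a ^ (2*k+n) / (fact k * fact (k+n))"
      unfolding t_def using a by (simp add: abs_mult power_abs)
    also have "\<dots> \<le> a ^ (2*k+n) / (fact k * fact n)"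
      by (intro divide_left_mono mult_left_mono) (auto simp: fact_mono a intro!: mult_pos_pos)
    also have "\<dots> = u k" unfolding u_def by (simp add: power_add power_mult field_simps power2_eq_square)
    finally show ?thesis .
  qed
  have st: "summable (\<lambda>k. \<bar>t k\<bar>)"
    by (rule summable_comparison_test[OF _ su]) (use tu in auto)
  have "\<bar>bessel_J_nat n (2*a)\<bar> = \<bar>suminf t\<bar>" unfolding bessel_J_nat_def t_def by simp
  also have "\<dots> \<le> (\<Sum>k. \<bar>t k\<bar>)" by (rule summable_rabs[OF st])
  also have "\<dots> \<le> suminf u" by (rule suminf_le[OF tu st su])
  also have "suminf u = (a ^ n / fact n) * exp (a\<^sup>2)"
  proof -
    have "(\<lambda>k. (a\<^sup>2) ^ k / fact k) sums exp (a\<^sup>2)"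
      using exp_converges[of "a\<^sup>2"] by (simp add: divide_inverse mult.commute scaleR_conv_of_real)
    then show ?thesis unfolding u_def by (rule sums_unique[OF sums_mult, symmetric])
  qed
  finally show ?thesis by (simp add: field_simps)
qed

lemma bessel_bound:
  fixes a :: real
  assumes a: "a \<ge> 0"
  shows "\<bar>bessel_J n (2*a)\<bar> \<le> exp (a\<^sup>2) * (a ^ nat \<bar>n\<bar> / fact (nat \<bar>n\<bar>))"
proof (cases "n \<ge> 0")
  case True then show ?thesis using bessel_nat_bound[OF a, of "nat n"] by (simp add: bessel_J_def)
next
  case False
  then have "nat \<bar>n\<bar> = nat (-n)" by simp
  then show ?thesis using False bessel_nat_bound[OF a, of "nat (-n)"] by (simp add: bessel_J_def abs_mult)
qed

lemma summable_Z:
  fixes h :: "nat \<Rightarrow> real"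
  assumes "summable h" "\<And>n. h n \<ge> 0"
  shows "(\<lambda>l::int. h (nat \<bar>l\<bar>)) summable_on UNIV"
proof -
  have hs: "h summable_on UNIV" by (rule summable_nonneg_imp_summable_on[OF assms])
  have 1: "(\<lambda>l::int. h (nat \<bar>l\<bar>)) summable_on range int"
    by (subst summable_on_reindex) (use hs in \<open>auto simp: o_def\<close>)
  have 2: "(\<lambda>l::int. h (nat \<bar>l\<bar>)) summable_on range (\<lambda>n. - int n)"
    by (subst summable_on_reindex) (use hs in \<open>auto simp: o_def inj_on_def\<close>)
  have "UNIV = range int \<union> range (\<lambda>n. - int n)"
  proof (intro set_eqI iffI)
    fix l :: int
    show "l \<in> range int \<union> range (\<lambda>n. - int n)"
    proof (cases "l \<ge> 0")
      case True then have "l = int (nat l)" by simp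
      then show ?thesis by blast
    next
      case False then have "l = - int (nat (-l))" by simp
      then show ?thesis by blast
    qed
  qed auto
  then show ?thesis using summable_on_union[OF 1 2] by simp
qed

lemma infsum_ennreal_real:
  fixes f :: "'a \<Rightarrow> real"
  assumes "f summable_on A" "\<And>x. x \<in> A \<Longrightarrow> f x \<ge> 0"
  shows "(\<Sum>\<^sub>\<infinity>x\<in>A. ennreal (f x)) = ennreal (infsum f A)"
proof -
  have "(\<Sum>\<^sub>\<infinity>x\<in>A. ennreal (f x)) = (SUP F\<in>{F. finite F \<and> F\<subseteq>A}. sum (\<lambda>x. ennreal (f x)) F)"
    by (rule nonneg_infsum_complete) simp
  also have "\<dots> = (SUP F\<in>{F. finite F \<and> F\<subseteq>A}. ennreal (sum f F))"
    by (intro SUP_cong refl sum_ennreal) (use assms(2) in auto)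
  also have "\<dots> = ennreal (infsum f A)"
    by (rule infsum_nonneg_is_SUPREMUM_ennreal[symmetric]) (use assms in auto)
  finally show ?thesis .
qed

definition rho1 :: "int \<Rightarrow> int \<times> int \<Rightarrow> complex" where
  "rho1 k = (\<lambda>p. if p = (0,k) then 1 else 0)"

lemma rho1_l2: "rho1 k \<in> l2_ZZ"
proof -
  have "(\<lambda>p. (cmod (rho1 k p))\<^sup>2) summable_on UNIV \<longleftrightarrow> (\<lambda>p. (cmod (rho1 k p))\<^sup>2) summable_on {(0,k)}"
    by (rule summable_on_cong_neutral) (auto simp: rho1_def)
  then show ?thesis unfolding l2_ZZ_def by simp
qed

lemma rho1_norm: "l2_normsq (rho1 k) = 1"
proof -
  have "l2_normsq (rho1 k) = (\<Sum>\<^sub>\<infinity>p\<in>{(0,k)}. ennreal ((cmod (rho1 k p))\<^sup>2))"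
    unfolding l2_normsq_def by (rule infsum_cong_neutral) (auto simp: rho1_def)
  then show ?thesis by (simp add: rho1_def)
qed

lemma T_rho1: "T_op g (rho1 k) l \<theta> = U_entry g \<theta> l 0 * cnj (U_entry g \<theta> l k)"
proof -
  have "T_op g (rho1 k) l \<theta> = (\<Sum>\<^sub>\<infinity>p\<in>{(0,k)}. (case p of (m, n) \<Rightarrow> U_entry g \<theta> l m * rho1 k (m, n) * cnj (U_entry g \<theta> l n)))"
    unfolding T_op_def by (rule infsum_cong_neutral) (auto simp: rho1_def split: if_splits)
  then show ?thesis by (simp add: rho1_def)
qed

lemma T_rho1_norm: "(cmod (T_op g (rho1 k) l \<theta>))\<^sup>2 = (bessel_J l (2 * cmod g))\<^sup>2 * (bessel_J (l - k) (2 * cmod g))\<^sup>2"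
  unfolding T_rho1 U_entry_def by (simp add: norm_mult power_mult_distrib)

lemma L2_rho1: "L2_normsq (T_op g (rho1 k)) =
   (\<Sum>\<^sub>\<infinity>l. ennreal ((bessel_J l (2 * cmod g))\<^sup>2 * (bessel_J (l - k) (2 * cmod g))\<^sup>2 * (2*pi)))"
  unfolding L2_normsq_def T_rho1_norm
  by (intro infsum_cong, subst nn_integral_cmult_indicator) (auto simp: ennreal_mult)

theorem mainTheorem5:
  fixes g :: complex
  assumes "g \<noteq> 0"
  shows "\<not> (\<exists>C::real. \<forall>\<rho>\<in>l2_ZZ. l2_normsq \<rho> \<le> ennreal (C\<^sup>2) * L2_normsq (T_op g \<rho>))"
proof
  assume "\<exists>C::real. \<forall>\<rho>\<in>l2_ZZ. l2_normsq \<rho> \<le> ennreal (C\<^sup>2) * L2_normsq (T_op g \<rho>)"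
  then obtain C :: real where C: "\<And>\<rho>. \<rho> \<in> l2_ZZ \<Longrightarrow> l2_normsq \<rho> \<le> ennreal (C\<^sup>2) * L2_normsq (T_op g \<rho>)"
    by blast
  define a where "a = cmod g"
  have a0: "a \<ge> 0" unfolding a_def by simp
  define E where "E = exp (a\<^sup>2)"
  have E0: "E > 0" unfolding E_def by simp
  define f where "f l = (bessel_J l (2 * a))\<^sup>2" for l
  define h where "h n = E\<^sup>2 * ((a\<^sup>2) ^ n / fact n)" for n
  define q where "q n = E * (a ^ n / fact n)" for n
  have f0: "f l \<ge> 0" for l unfolding f_def by simp
  have fq: "f l \<le> (q (nat \<bar>l\<bar>))\<^sup>2" for l
  proof -
    have "\<bar>bessel_J l (2 * a)\<bar> \<le> q (nat \<bar>l\<bar>)" unfolding q_def E_def by (rule bessel_bound[OF a0])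
    then have "\<bar>bessel_J l (2 * a)\<bar>\<^sup>2 \<le> (q (nat \<bar>l\<bar>))\<^sup>2" by (intro power_mono) auto
    then show ?thesis unfolding f_def by simp
  qed
  have qh: "(q n)\<^sup>2 \<le> h n" for n
  proof -
    have "(q n)\<^sup>2 = E\<^sup>2 * ((a\<^sup>2) ^ n / fact n) * (1 / fact n)"
      unfolding q_def by (simp add: power_mult_distrib power_divide power2_eq_square power_mult[symmetric] mult.commute)
    also have "\<dots> \<le> E\<^sup>2 * ((a\<^sup>2) ^ n / fact n) * 1"
      by (intro mult_left_mono) (auto simp: a0)
    finally show ?thesis unfolding h_def by simp
  qed
  have hs: "summable h" unfolding h_def
    by (rule summable_mult) (use summable_exp[of "a\<^sup>2"] in \<open>simp add: field_simps\<close>)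
  have h0: "h n \<ge> 0" for n unfolding h_def by simp
  have fs: "f summable_on UNIV"
    by (rule summable_on_comparison_test[OF summable_Z[OF hs h0]]) (use f0 in \<open>auto intro: order_trans[OF fq qh]\<close>)
  define S where "S = infsum f UNIV"
  have S0: "S \<ge> 0" unfolding S_def by (rule infsum_nonneg) (use f0 in auto)
  define \<eta> where "\<eta> = 1 / (4 * pi * (C\<^sup>2 + 1) * (S + 1))"
  have \<eta>0: "\<eta> > 0" proof -
    have "0 < 4 * pi * (C\<^sup>2 + 1) * (S + 1)" using S0
      by (intro mult_pos_pos) (auto simp: add_pos_nonneg add_nonneg_pos)
    then show ?thesis unfolding \<eta>_def by simp
  qed
  have "q \<longlonglongrightarrow> 0"
  proof -
    have "(\<lambda>n. inverse (fact n) * a ^ n) \<longlonglongrightarrow> 0" by (rule summable_LIMSEQ_zero[OF summable_exp])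
    then have "(\<lambda>n. E * (inverse (fact n) * a ^ n)) \<longlonglongrightarrow> E * 0" by (intro tendsto_mult tendsto_const)
    then show ?thesis unfolding q_def by (simp add: field_simps)
  qed
  then have "eventually (\<lambda>n. dist (q n) 0 < sqrt \<eta>) sequentially"
    using \<eta>0 by (auto simp: tendsto_iff)
  then obtain N where N: "\<And>n. n \<ge> N \<Longrightarrow> \<bar>q n\<bar> < sqrt \<eta>" by (auto simp: eventually_sequentially)
  have fsmall: "f l \<le> \<eta>" if "nat \<bar>l\<bar> \<ge> N" for l
  proof -
    have "(q (nat \<bar>l\<bar>))\<^sup>2 \<le> (sqrt \<eta>)\<^sup>2"
      using N[OF that] by (metis abs_ge_zero abs_le_square_iff less_imp_le real_sqrt_abs real_sqrt_pow2 \<eta>0 less_imp_le)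
    then show ?thesis using fq[of l] \<eta>0 by simp
  qed
  define k where "k = 2 * int N"
  define v where "v l = f l * f (l - k) * (2 * pi)" for l
  have vb: "v l \<le> 2 * pi * \<eta> * (f l + f (l - k))" for l
  proof (cases "nat \<bar>l\<bar> \<ge> N")
    case True
    have "f l * f (l - k) \<le> \<eta> * f (l - k)" by (intro mult_right_mono fsmall True f0)
    moreover have "0 \<le> \<eta> * f l" "0 \<le> \<eta> * f (l - k)" using f0 \<eta>0 by auto
    ultimately have "f l * f (l - k) \<le> \<eta> * (f l + f (l - k))" by (simp add: algebra_simps)
    then have "2 * pi * (f l * f (l - k)) \<le> 2 * pi * (\<eta> * (f l + f (l - k)))"
      by (intro mult_left_mono) auto
    then show ?thesis unfolding v_def by (simp add: algebra_simps)
  next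
    case False
    then have "nat \<bar>l - k\<bar> \<ge> N" unfolding k_def by linarith
    then have "f l * f (l - k) \<le> f l * \<eta>" by (intro mult_left_mono fsmall f0)
    moreover have "0 \<le> \<eta> * f l" "0 \<le> \<eta> * f (l - k)" using f0 \<eta>0 by auto
    ultimately have "f l * f (l - k) \<le> \<eta> * (f l + f (l - k))" by (simp add: algebra_simps)
    then have "2 * pi * (f l * f (l - k)) \<le> 2 * pi * (\<eta> * (f l + f (l - k)))"
      by (intro mult_left_mono) auto
    then show ?thesis unfolding v_def by (simp add: algebra_simps)
  qed
  have bij: "bij_betw (\<lambda>l. l - k) UNIV UNIV"
    by (rule bij_betwI[where g="\<lambda>l. l + k"]) auto
  have fks: "(\<lambda>l. f (l - k)) summable_on UNIV"
    using summable_on_reindex_bij_betw[OF bij, of f] fs by simp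
  have fkS: "infsum (\<lambda>l. f (l - k)) UNIV = S"
    unfolding S_def by (rule infsum_reindex_bij_betw[OF bij])
  have ws: "(\<lambda>l. 2 * pi * \<eta> * (f l + f (l - k))) summable_on UNIV"
    by (intro summable_on_cmult_right summable_on_add fs fks)
  have v0: "v l \<ge> 0" for l unfolding v_def using f0 by simp
  have vs: "v summable_on UNIV"
    by (rule summable_on_comparison_test[OF ws]) (use vb v0 in auto)
  have "infsum v UNIV \<le> infsum (\<lambda>l. 2 * pi * \<eta> * (f l + f (l - k))) UNIV"
    by (rule infsum_mono[OF vs ws vb])
  also have "\<dots> = 2 * pi * \<eta> * (S + S)"
    by (subst infsum_cmult_right) (use fs fks fkS in \<open>auto simp: infsum_add S_def summable_on_add\<close>)
  finally have vS: "infsum v UNIV \<le> 4 * pi * \<eta> * S" by simp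
  have "1 = l2_normsq (rho1 k)" by (simp add: rho1_norm)
  also have "\<dots> \<le> ennreal (C\<^sup>2) * L2_normsq (T_op g (rho1 k))" by (rule C[OF rho1_l2])
  also have "L2_normsq (T_op g (rho1 k)) = ennreal (infsum v UNIV)"
    unfolding L2_rho1 a_def[symmetric] f_def[symmetric] v_def[symmetric]
    by (rule infsum_ennreal_real[OF vs v0])
  finally have 1: "1 \<le> ennreal (C\<^sup>2) * ennreal (infsum v UNIV)" .
  have vi0: "infsum v UNIV \<ge> 0" by (rule infsum_nonneg) (use v0 in auto)
  have "ennreal (C\<^sup>2) * ennreal (infsum v UNIV) = ennreal (C\<^sup>2 * infsum v UNIV)"
    using vi0 by (simp add: ennreal_mult)
  with 1 have "ennreal 1 \<le> ennreal (C\<^sup>2 * infsum v UNIV)" by simp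
  then have 1: "1 \<le> C\<^sup>2 * infsum v UNIV"
    using vi0 by (subst (asm) ennreal_le_iff) auto
  have "C\<^sup>2 * infsum v UNIV \<le> C\<^sup>2 * (4 * pi * \<eta> * S)" by (intro mult_left_mono vS) auto
  also have "\<dots> = (C\<^sup>2 * S) / ((C\<^sup>2 + 1) * (S + 1))"
  proof -
    have p1: "C\<^sup>2 + 1 \<noteq> 0" "S + 1 \<noteq> 0" using S0 zero_le_power2[of C] by linarith+
    then have D: "(C\<^sup>2 + 1) * (S + 1) \<noteq> 0" by simp
    have "4 * pi * \<eta> = 1 / ((C\<^sup>2 + 1) * (S + 1))" unfolding \<eta>_def by simp
    then show ?thesis by (simp add: mult.assoc[symmetric])
  qed
  also have "\<dots> < 1"
  proof -
    have "C\<^sup>2 * S < (C\<^sup>2 + 1) * (S + 1)" using S0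
      by (simp add: algebra_simps) (smt (verit) zero_le_power2 mult_nonneg_nonneg)
    moreover have "(C\<^sup>2 + 1) * (S + 1) > 0" using S0 zero_le_power2[of C]
      by (intro mult_pos_pos) linarith+
    ultimately show ?thesis by (simp add: divide_less_eq)
  qed
  finally show False using 1 by simp
qed

end
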